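(* Let $G$ be a bipartite TRVG with a rectangle representation in which the rectangles of one part are $g_1,\dots,g_p$ ($p\ge 1$) and the rectangles of the other part are $r_1,\dots,r_q$. If, for each $i\in\{1,\dots,p\}$, $g_i$ sees exactly $\alpha_i$ of the rectangles $r_1,\dots,r_q$ horizontally, then \[ q\ \ge\ \alpha_1+\alpha_2+\cdots+\alpha_p-(p-1). \]
   Context: A graph $G$ is a transparent rectangle visibility graph (TRVG) if its vertices can be represented by a collection of pairwise non-overlapping rectangles in the plane whose sides are parallel to the coordinate axes, one per vertex, such that two distinct vertices are adjacent if and only if there is a horizontal or a vertical line intersecting the interiors of both of their rectangles (other rectangles do not block visibility). Two rectangles see each other horizontally if some horizontal line meets the interiors of both. *)

theory Defs
  imports Main "HOL-Library.Product_Order" Complex_Main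
begin

datatype rect = Rect (x1: real) (x2: real) (y1: real) (y2: real)

definition valid_rect :: "rect \<Rightarrow> bool" where
  "valid_rect R \<longleftrightarrow> x1 R < x2 R \<and> y1 R < y2 R"

definition rect_interior :: "rect \<Rightarrow> (real \<times> real) set" where
  "rect_interior R = {(x, y). x1 R < x \<and> x < x2 R \<and> y1 R < y \<and> y < y2 R}"

definition non_overlapping :: "rect \<Rightarrow> rect \<Rightarrow> bool" where
  "non_overlapping A B \<longleftrightarrow> rect_interior A \<inter> rect_interior B = {}"

definition sees_h :: "rect \<Rightarrow> rect \<Rightarrow> bool" where
  "sees_h A B \<longleftrightarrow> (\<exists>y. (\<exists>x. (x, y) \<in> rect_interior A) \<and> (\<exists>x. (x, y) \<in> rect_interior B))"

definition sees_v :: "rect \<Rightarrow> rect \<Rightarrow> bool" where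
  "sees_v A B \<longleftrightarrow> (\<exists>x. (\<exists>y. (x, y) \<in> rect_interior A) \<and> (\<exists>y. (x, y) \<in> rect_interior B))"

definition trvg_adj :: "rect \<Rightarrow> rect \<Rightarrow> bool" where
  "trvg_adj A B \<longleftrightarrow> sees_h A B \<or> sees_v A B"

end

theory Submission
  imports Defs
begin

lemma count_edges:
  fixes la ua lb ub :: "nat \<Rightarrow> real" and I J :: "nat set"
  assumes fin: "finite I" "finite J" and ne: "I \<noteq> {}"
    and dI: "\<forall>i\<in>I. \<forall>i'\<in>I. i \<noteq> i' \<longrightarrow> \<not> (max (la i) (la i') < min (ua i) (ua i'))"
    and dJ: "\<forall>j\<in>J. \<forall>j'\<in>J. j \<noteq> j' \<longrightarrow> \<not> (max (lb j) (lb j') < min (ub j) (ub j'))"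
  shows "card (Sigma I (\<lambda>i. {j\<in>J. max (la i) (lb j) < min (ua i) (ub j)})) + 1 \<le> card I + card J"
proof -
  define E where "E = Sigma I (\<lambda>i. {j\<in>J. max (la i) (lb j) < min (ua i) (ub j)})"
  define f :: "nat \<times> nat \<Rightarrow> nat + nat" where
    "f = (\<lambda>(i,j). if ua i \<le> ub j then Inl i else Inr j)"
  define S :: "(nat + nat) set" where "S = Inl ` I \<union> Inr ` J"
  have finE: "finite E" unfolding E_def using fin by auto
  have inj: "inj_on f E"
  proof (rule inj_onI)
    fix x y assume x: "x \<in> E" and y: "y \<in> E" and fxy: "f x = f y"
    obtain i j where xij: "x = (i,j)" by force
    obtain i' j' where yij: "y = (i',j')" by force
    have X: "i \<in> I" "j \<in> J" "max (la i) (lb j) < min (ua i) (ub j)" using x xij E_def by auto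
    have Y: "i' \<in> I" "j' \<in> J" "max (la i') (lb j') < min (ua i') (ub j')" using y yij E_def by auto
    show "x = y"
    proof (cases "ua i \<le> ub j")
      case True
      then have "ua i' \<le> ub j'" "i = i'" using fxy xij yij f_def
        by (auto split: if_splits)
      then have "j = j'"
      proof -
        have "max (lb j) (lb j') < min (ub j) (ub j')"
        proof -
          have a: "lb j < ua i" "ua i \<le> ub j" using X(3) True by simp_all
          have b: "lb j' < ua i" "ua i \<le> ub j'" using Y(3) \<open>ua i' \<le> ub j'\<close> \<open>i = i'\<close> by simp_all
          show ?thesis using a b by (simp only: max_less_iff_conj min_less_iff_conj) linarith
        qed
        then show ?thesis using dJ X(2) Y(2) by blast
      qed
      then show ?thesis using xij yij \<open>i = i'\<close> by simp
    next
      case False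
      then have "\<not> ua i' \<le> ub j'" "j = j'" using fxy xij yij f_def
        by (auto split: if_splits)
      then have "i = i'"
      proof -
        have "max (la i) (la i') < min (ua i) (ua i')"
        proof -
          have a: "la i < ub j" "ub j < ua i" using X(3) False by simp_all
          have b: "la i' < ub j" "ub j < ua i'" using Y(3) \<open>\<not> ua i' \<le> ub j'\<close> \<open>j = j'\<close> by simp_all
          show ?thesis using a b by (simp only: max_less_iff_conj min_less_iff_conj) linarith
        qed
        then show ?thesis using dI X(1) Y(1) by blast
      qed
      then show ?thesis using xij yij \<open>j = j'\<close> by simp
    qed
  qed
  have sub: "f ` E \<subseteq> S" unfolding S_def f_def E_def by auto
  have finU: "finite (ua ` I \<union> ub ` J)" using fin by auto
  define M where "M = Max (ua ` I \<union> ub ` J)"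
  have Mge: "\<And>i. i \<in> I \<Longrightarrow> ua i \<le> M" "\<And>j. j \<in> J \<Longrightarrow> ub j \<le> M"
    unfolding M_def using finU by auto
  have Min: "M \<in> ua ` I \<union> ub ` J" unfolding M_def using finU ne by (intro Max_in) auto
  obtain z where z: "z \<in> S" "z \<notin> f ` E"
  proof (cases "\<exists>a\<in>I. ua a = M")
    case True
    then obtain a where a: "a \<in> I" "ua a = M" by blast
    show ?thesis
    proof (cases "Inl a \<in> f ` E")
      case True
      then obtain i j where ij: "(i,j) \<in> E" "f (i,j) = Inl a" by auto
      then have "i = a" "ua a \<le> ub j" "j \<in> J" using f_def E_def by (auto split: if_splits)
      then have ubj: "ub j = M" using a Mge by force
      have "Inr j \<notin> f ` E"
      proof
        assume "Inr j \<in> f ` E"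
        then obtain i' j' where "(i',j') \<in> E" "f (i',j') = Inr j" by auto
        then have "i' \<in> I" "\<not> ua i' \<le> ub j" using f_def E_def by (auto split: if_splits)
        then show False using Mge ubj by force
      qed
      then show ?thesis using that \<open>j \<in> J\<close> S_def by auto
    next
      case False
      then show ?thesis using that a S_def by auto
    qed
  next
    case False
    then obtain j where j: "j \<in> J" "ub j = M" using Min by auto
    have "Inr j \<notin> f ` E"
    proof
      assume "Inr j \<in> f ` E"
      then obtain i' j' where "(i',j') \<in> E" "f (i',j') = Inr j" by auto
      then have "i' \<in> I" "\<not> ua i' \<le> ub j" using f_def E_def by (auto split: if_splits)
      then show False using Mge j by force
    qed
    then show ?thesis using that j S_def by auto
  qed
  have finS: "finite S" using fin S_def by auto
  have cS: "card S = card I + card J"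
    unfolding S_def using fin
    by (subst card_Un_disjoint) (auto simp: card_image)
  have "card E = card (f ` E)" using inj by (simp add: card_image)
  also have "\<dots> \<le> card (S - {z})" using sub z finS by (intro card_mono) auto
  also have "\<dots> = card S - 1" using z finS by simp
  finally have le: "card E \<le> card S - 1" .
  have "card S > 0" using z finS card_gt_0_iff by blast
  then have "card E + 1 \<le> card S" using le by linarith
  then show ?thesis using cS E_def by simp
qed

lemma sees_h_iff:
  assumes "valid_rect A" "valid_rect B"
  shows "sees_h A B \<longleftrightarrow> max (y1 A) (y1 B) < min (y2 A) (y2 B)"
proof
  assume "sees_h A B"
  then show "max (y1 A) (y1 B) < min (y2 A) (y2 B)"
    unfolding sees_h_def rect_interior_def by auto
next
  assume h: "max (y1 A) (y1 B) < min (y2 A) (y2 B)"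
  define y where "y = (max (y1 A) (y1 B) + min (y2 A) (y2 B)) / 2"
  have "(\<exists>x. (x, y) \<in> rect_interior A)"
    using assms(1) h unfolding rect_interior_def valid_rect_def y_def
    by (intro exI[of _ "(x1 A + x2 A)/2"]) auto
  moreover have "(\<exists>x. (x, y) \<in> rect_interior B)"
    using assms(2) h unfolding rect_interior_def valid_rect_def y_def
    by (intro exI[of _ "(x1 B + x2 B)/2"]) auto
  ultimately show "sees_h A B" unfolding sees_h_def by blast
qed

theorem lemma2:
  fixes g r :: "nat \<Rightarrow> rect" and p q :: nat
  assumes "p \<ge> 1"
    and "\<forall>i\<in>{1..p}. valid_rect (g i)"
    and "\<forall>j\<in>{1..q}. valid_rect (r j)"
    and "\<forall>i\<in>{1..p}. \<forall>i'\<in>{1..p}. i \<noteq> i' \<longrightarrow> non_overlapping (g i) (g i')"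
    and "\<forall>j\<in>{1..q}. \<forall>j'\<in>{1..q}. j \<noteq> j' \<longrightarrow> non_overlapping (r j) (r j')"
    and "\<forall>i\<in>{1..p}. \<forall>j\<in>{1..q}. non_overlapping (g i) (r j)"
    and "\<forall>i\<in>{1..p}. \<forall>i'\<in>{1..p}. i \<noteq> i' \<longrightarrow> \<not> trvg_adj (g i) (g i')"
    and "\<forall>j\<in>{1..q}. \<forall>j'\<in>{1..q}. j \<noteq> j' \<longrightarrow> \<not> trvg_adj (r j) (r j')"
  shows "int q \<ge> (\<Sum>i=1..p. int (card {j\<in>{1..q}. sees_h (g i) (r j)})) - (int p - 1)"
proof -
  let ?la = "\<lambda>i. y1 (g i)" and ?ua = "\<lambda>i. y2 (g i)"
  let ?lb = "\<lambda>j. y1 (r j)" and ?ub = "\<lambda>j. y2 (r j)"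
  have dI: "\<forall>i\<in>{1..p}. \<forall>i'\<in>{1..p}. i \<noteq> i' \<longrightarrow> \<not> (max (?la i) (?la i') < min (?ua i) (?ua i'))"
    using assms(2,7) sees_h_iff unfolding trvg_adj_def by blast
  have dJ: "\<forall>j\<in>{1..q}. \<forall>j'\<in>{1..q}. j \<noteq> j' \<longrightarrow> \<not> (max (?lb j) (?lb j') < min (?ub j) (?ub j'))"
    using assms(3,8) sees_h_iff unfolding trvg_adj_def by blast
  have ne: "{1..p} \<noteq> {}" using assms(1) by auto
  have c: "card (Sigma {1..p} (\<lambda>i. {j\<in>{1..q}. max (?la i) (?lb j) < min (?ua i) (?ub j)})) + 1 \<le> p + q"
    using count_edges[OF _ _ ne dI dJ] by simp
  have eq: "\<And>i. i \<in> {1..p} \<Longrightarrow> {j\<in>{1..q}. sees_h (g i) (r j)} = {j\<in>{1..q}. max (?la i) (?lb j) < min (?ua i) (?ub j)}"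
    using assms(2,3) sees_h_iff by auto
  have "(\<Sum>i=1..p. card {j\<in>{1..q}. sees_h (g i) (r j)}) = (\<Sum>i=1..p. card {j\<in>{1..q}. max (?la i) (?lb j) < min (?ua i) (?ub j)})"
    using eq by (intro sum.cong) auto
  also have "\<dots> = card (Sigma {1..p} (\<lambda>i. {j\<in>{1..q}. max (?la i) (?lb j) < min (?ua i) (?ub j)}))"
    by (subst card_SigmaI) auto
  finally have "(\<Sum>i=1..p. card {j\<in>{1..q}. sees_h (g i) (r j)}) + 1 \<le> p + q" using c by simp
  then have "int (\<Sum>i=1..p. card {j\<in>{1..q}. sees_h (g i) (r j)}) + 1 \<le> int p + int q" by linarith
  then show ?thesis by (simp add: of_nat_sum)
qed

end
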